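(* Let $N \ge 1$ and let $W_N$ be the set of binary words of length $N$. Define $\varphi_7 : W_N \to W_N$ by $\varphi_7(u) = v\, 1010110\, v'$ if $u = v\, 0110110\, v'$ where $v, v'$ are (possibly empty) words such that $v0110$ does not contain $0110110$ as a contiguous subword; and $\varphi_7(u) = u$ otherwise. Then $|P(\varphi_7(u))| \leq |P(u)|$ for every $u \in W_N$.
   Context: Juxtaposition denotes concatenation. For a binary word $w = w_1 \cdots w_\ell$ of length $\ell$, $P(w)$ is the set of indices $i \geq 2$ such that at least one of the following holds: (i) $\ell \geq i$ and $w_{i-1} w_i = 00$; (ii) $\ell \geq i+2$ and $w_{i-1} w_i w_{i+1} w_{i+2} = 0100$; (iii) $\ell \geq i+3$ and $w_{i-1} \cdots w_{i+3} = 01010$. *)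

theory Defs
  imports Main "HOL-Library.Sublist"
begin

text \<open>Binary words are lists over {0,1} (as naturals); letters are 1-indexed in
the paper: w_j = w ! (j - 1).\<close>

definition W :: "nat \<Rightarrow> nat list set" where
  "W N = {w. length w = N \<and> set w \<subseteq> {0, 1}}"

definition P :: "nat list \<Rightarrow> nat set" where
  "P w = {i. 2 \<le> i \<and>
     ((length w \<ge> i \<and> w ! (i - 2) = 0 \<and> w ! (i - 1) = 0)
    \<or> (length w \<ge> i + 2 \<and> w ! (i - 2) = 0 \<and> w ! (i - 1) = 1 \<and> w ! i = 0 \<and> w ! (i + 1) = 0)
    \<or> (length w \<ge> i + 3 \<and> w ! (i - 2) = 0 \<and> w ! (i - 1) = 1 \<and> w ! i = 0 \<and> w ! (i + 1) = 1
         \<and> w ! (i + 2) = 0))}"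

definition phi7_cond :: "nat list \<Rightarrow> nat list \<Rightarrow> nat list \<Rightarrow> bool" where
  "phi7_cond u v v' \<longleftrightarrow> u = v @ [0,1,1,0,1,1,0] @ v' \<and>
      \<not> sublist [0,1,1,0,1,1,0] (v @ [0,1,1,0])"

definition phi7 :: "nat list \<Rightarrow> nat list" where
  "phi7 u = (if \<exists>v v'. phi7_cond u v v'
             then (let (v, v') = (SOME p. phi7_cond u (fst p) (snd p)) in v @ [1,0,1,0,1,1,0] @ v')
             else u)"

end

theory Submission
  imports Defs
begin

lemma key:
  assumes len: "length w1 = length w2"
    and eq: "\<And>k. k \<noteq> a \<Longrightarrow> k \<noteq> Suc a \<Longrightarrow> w1!k = w2!k"
    and L: "a + 7 \<le> length w1"
    and h: "w1!a = 1" "w1!(Suc a) = 0" "w2!a = 0" "w2!(Suc a) = 1"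
      "w1!(a+2) = 1" "w1!(a+3) = 0" "w1!(a+4) = 1" "w1!(a+5) = 1" "w1!(a+6) = 0"
  shows "P w1 \<subseteq> P w2"
proof
  fix i assume i: "i \<in> P w1"
  have far: "i + 2 < a \<or> i > a + 3 \<or> i + 2 = a \<or> i + 1 = a \<or> i = a \<or> i = a + 1 \<or> i = a + 2 \<or> i = a + 3"
    by arith
  moreover {
    assume "i + 2 < a \<or> i > a + 3"
    then have e: "w1!(i-2) = w2!(i-2)" "w1!(i-1) = w2!(i-1)" "w1!i = w2!i" "w1!(i+1) = w2!(i+1)" "w1!(i+2) = w2!(i+2)"
      using eq i by (auto simp: P_def)
    have "i \<in> P w2" using i e len by (simp add: P_def)
  } moreover {
    assume c: "i + 2 = a"
    have e: "w1!(i-2) = w2!(i-2)" "w1!(i-1) = w2!(i-1)" "w1!i = w2!i" "w1!(i+1) = w2!(i+1)"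
      using eq i c by (auto simp: P_def)
    have "i \<in> P w2" using i e len h c by (auto simp: P_def)
  } moreover {
    assume c: "i + 1 = a"
    have e: "w1!(i-2) = w2!(i-2)" "w1!(i-1) = w2!(i-1)" "w1!i = w2!i" "w1!(i+3) = w2!(i+3)"
      using eq i c by (auto simp: P_def)
    have "i \<in> P w2" using i e len h c by (auto simp: P_def)
  } moreover {
    assume c: "i = a"
    have e: "w1!(i-2) = w2!(i-2)" "w1!(i-1) = w2!(i-1)"
      using eq i c by (auto simp: P_def)
    have "i \<in> P w2" using i e len h c by (auto simp: P_def)
  } moreover {
    assume c: "i = a + 1"
    have e: "w1!(i-2) = w2!(i-2)"
      using eq i c by (auto simp: P_def)
    have "i \<in> P w2" using i e len h c by (auto simp: P_def)
  } moreover {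
    assume c: "i = a + 2"
    have "i \<in> P w2" using i len h c by (auto simp: P_def add.commute)
  } moreover {
    assume c: "i = a + 3"
    have "i \<in> P w2" using i len h c by (auto simp: P_def add.commute)
  }
  ultimately show "i \<in> P w2" by blast
qed

lemma key2: "P (v @ [1,0,1,0,1,1,0] @ v') \<subseteq> P (v @ [0,1,1,0,1,1,0] @ v')"
proof (rule key[where a = "length v"])
  fix k assume "k \<noteq> length v" "k \<noteq> Suc (length v)"
  then show "(v @ [1,0,1,0,1,1,0] @ v') ! k = (v @ [0,1,1,0,1,1,0] @ v') ! k"
    by (cases "k < length v") (auto simp: nth_append nth_Cons split: nat.splits)
qed (auto simp: nth_append)

lemma finP: "finite (P w)"
  by (rule finite_subset[of _ "{..length w}"]) (auto simp: P_def)

theorem lemma4p7: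
  fixes N :: nat and u :: "nat list"
  assumes "N \<ge> 1" and "u \<in> W N"
  shows "card (P (phi7 u)) \<le> card (P u)"
proof (cases "\<exists>v v'. phi7_cond u v v'")
  case True
  then obtain p where p: "phi7_cond u (fst p) (snd p)" by auto
  define q where "q = (SOME p. phi7_cond u (fst p) (snd p))"
  have q: "phi7_cond u (fst q) (snd q)" unfolding q_def by (rule someI, rule p)
  have ph: "phi7 u = fst q @ [1,0,1,0,1,1,0] @ snd q"
    using True unfolding phi7_def q_def[symmetric] by (simp add: case_prod_beta)
  have u: "u = fst q @ [0,1,1,0,1,1,0] @ snd q" using q by (simp add: phi7_cond_def)
  show ?thesis unfolding ph using key2 u finP by (metis card_mono)
next
  case False
  then show ?thesis by (simp add: phi7_def)
qed

end
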